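(* Let $G_l$ be a graph of order $n_l$, maximum degree $\Delta_l$ and minimum degree $\delta_l$, $l\in\{1,2\}$. Then: (i) For $i,j\in\{1,2\}$ with $i\neq j$ and every integer $k\in\{\Delta_j-\Delta_i,\dots,\Delta_i+\Delta_j-2\}$, $\phi_k^p(G_1\times G_2)\ge n_j\,\phi_{k-\Delta_j}^p(G_i)$. (ii) For all integers $k_1\in\{1-\delta_1,\dots,\Delta_1-2\}$ and $k_2\in\{1-\delta_2,\dots,\Delta_2-2\}$ and every integer $k\in\{k_1+k_2-1,\dots,\Delta_1+\Delta_2-2\}$, $$\phi_k^p(G_1\times G_2)\ge \phi_{k_1}^p(G_1)\phi_{k_2}^p(G_2)+\min\{n_1-\phi_{k_1}^p(G_1),\,n_2-\phi_{k_2}^p(G_2)\}.$$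
   Context: All graphs are finite and simple. For a graph $G=(V,E)$, a set $S\subseteq V$ and $v\in V$, let $\delta_S(v)=|\{u\in S: uv\in E\}|$, $\overline{S}=V\setminus S$, and let $\partial S$ be the set of vertices of $\overline S$ adjacent to at least one vertex of $S$. For an integer $k$, a non-empty set $S\subseteq V$ is a defensive $k$-alliance if $\delta_S(v)\ge \delta_{\overline S}(v)+k$ for every $v\in S$; an offensive $k$-alliance if $\delta_S(v)\ge \delta_{\overline S}(v)+k$ for every $v\in\partial S$; and a powerful $k$-alliance if it is both a defensive $k$-alliance and an offensive $(k+2)$-alliance. A set $X\subseteq V$ is a powerful $k$-alliance free set ($k$-paf set) if no powerful $k$-alliance $S$ satisfies $S\subseteq X$. $\phi_k^p(G)$ denotes the maximum cardinality of a $k$-paf set in $G$. The Cartesian product $G_1\times G_2$ of $G_1=(V_1,E_1)$, $G_2=(V_2,E_2)$ has vertex set $V_1\times V_2$, with $(a,b)$ adjacent to $(c,d)$ iff either $a=c$ and $bd\in E_2$, or $b=d$ and $ac\in E_1$. *)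

theory Defs
  imports Main
begin

definition graph :: "'a set \<Rightarrow> ('a \<Rightarrow> 'a \<Rightarrow> bool) \<Rightarrow> bool" where
  "graph V E \<longleftrightarrow> finite V \<and> V \<noteq> {} \<and> (\<forall>u v. E u v \<longrightarrow> u \<in> V \<and> v \<in> V)
     \<and> (\<forall>u v. E u v \<longrightarrow> E v u) \<and> (\<forall>v. \<not> E v v)"

definition deg :: "'a set \<Rightarrow> ('a \<Rightarrow> 'a \<Rightarrow> bool) \<Rightarrow> 'a \<Rightarrow> nat" where
  "deg V E v = card {u \<in> V. E u v}"

definition maxdeg :: "'a set \<Rightarrow> ('a \<Rightarrow> 'a \<Rightarrow> bool) \<Rightarrow> int" where
  "maxdeg V E = int (Max (deg V E ` V))"

definition mindeg :: "'a set \<Rightarrow> ('a \<Rightarrow> 'a \<Rightarrow> bool) \<Rightarrow> int" where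
  "mindeg V E = int (Min (deg V E ` V))"

definition delta_in :: "('a \<Rightarrow> 'a \<Rightarrow> bool) \<Rightarrow> 'a set \<Rightarrow> 'a \<Rightarrow> int" where
  "delta_in E S v = int (card {u \<in> S. E u v})"

definition boundary :: "'a set \<Rightarrow> ('a \<Rightarrow> 'a \<Rightarrow> bool) \<Rightarrow> 'a set \<Rightarrow> 'a set" where
  "boundary V E S = {v \<in> V - S. \<exists>u \<in> S. E u v}"

definition defensive_alliance :: "'a set \<Rightarrow> ('a \<Rightarrow> 'a \<Rightarrow> bool) \<Rightarrow> int \<Rightarrow> 'a set \<Rightarrow> bool" where
  "defensive_alliance V E k S \<longleftrightarrow> S \<noteq> {} \<and> S \<subseteq> V \<and>
     (\<forall>v \<in> S. delta_in E S v \<ge> delta_in E (V - S) v + k)"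

definition offensive_alliance :: "'a set \<Rightarrow> ('a \<Rightarrow> 'a \<Rightarrow> bool) \<Rightarrow> int \<Rightarrow> 'a set \<Rightarrow> bool" where
  "offensive_alliance V E k S \<longleftrightarrow> S \<noteq> {} \<and> S \<subseteq> V \<and>
     (\<forall>v \<in> boundary V E S. delta_in E S v \<ge> delta_in E (V - S) v + k)"

definition powerful_alliance :: "'a set \<Rightarrow> ('a \<Rightarrow> 'a \<Rightarrow> bool) \<Rightarrow> int \<Rightarrow> 'a set \<Rightarrow> bool" where
  "powerful_alliance V E k S \<longleftrightarrow> defensive_alliance V E k S \<and> offensive_alliance V E (k + 2) S"

definition paf_set :: "'a set \<Rightarrow> ('a \<Rightarrow> 'a \<Rightarrow> bool) \<Rightarrow> int \<Rightarrow> 'a set \<Rightarrow> bool" where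
  "paf_set V E k X \<longleftrightarrow> X \<subseteq> V \<and> \<not> (\<exists>S. S \<subseteq> X \<and> powerful_alliance V E k S)"

text \<open>phi_k^p(G): maximum cardinality of a k-paf set (the empty set is always one).\<close>
definition phi_p :: "'a set \<Rightarrow> ('a \<Rightarrow> 'a \<Rightarrow> bool) \<Rightarrow> int \<Rightarrow> int" where
  "phi_p V E k = int (Max (card ` {X. paf_set V E k X}))"

definition cart_V :: "'a set \<Rightarrow> 'b set \<Rightarrow> ('a \<times> 'b) set" where
  "cart_V V1 V2 = V1 \<times> V2"

definition cart_E :: "('a \<Rightarrow> 'a \<Rightarrow> bool) \<Rightarrow> ('b \<Rightarrow> 'b \<Rightarrow> bool) \<Rightarrow> ('a \<times> 'b) \<Rightarrow> ('a \<times> 'b) \<Rightarrow> bool" where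
  "cart_E E1 E2 = (\<lambda>(a, b) (c, d). (a = c \<and> E2 b d) \<or> (b = d \<and> E1 a c))"

end

theory Submission
  imports Defs
begin


lemma graph_fin: "graph V E \<Longrightarrow> finite V" by (simp add: graph_def)

lemma phi_ge:
  assumes "finite V" "paf_set V E k X"
  shows "int (card X) \<le> phi_p V E k"
proof -
  have "{X. paf_set V E k X} \<subseteq> Pow V" by (auto simp: paf_set_def)
  hence "finite {X. paf_set V E k X}" using assms(1) finite_Pow_iff finite_subset by metis
  thus ?thesis using assms(2) unfolding phi_p_def by (simp add: Max_ge)
qed

lemma phi_att:
  assumes "finite V"
  shows "\<exists>X. paf_set V E k X \<and> phi_p V E k = int (card X)"
proof -
  have "{X. paf_set V E k X} \<subseteq> Pow V" by (auto simp: paf_set_def)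
  hence f: "finite {X. paf_set V E k X}" using assms(1) finite_Pow_iff finite_subset by metis
  have "paf_set V E k {}" by (auto simp: paf_set_def powerful_alliance_def defensive_alliance_def)
  hence ne: "card ` {X. paf_set V E k X} \<noteq> {}" by auto
  have "Max (card ` {X. paf_set V E k X}) \<in> card ` {X. paf_set V E k X}"
    using f ne by (intro Max_in) auto
  then obtain X where "paf_set V E k X" "Max (card ` {X. paf_set V E k X}) = card X" by auto
  thus ?thesis unfolding phi_p_def by auto
qed

lemma delta_compl:
  assumes "finite V" "S \<subseteq> V"
  shows "delta_in E (V - S) v = int (deg V E v) - delta_in E S v"
proof -
  have f: "finite V" using assms by auto
  have "{u\<in>V. E u v} = {u\<in>S. E u v} \<union> {u\<in>V-S. E u v}" using assms(2) by auto
  moreover have "card ({u\<in>S. E u v} \<union> {u\<in>V-S. E u v}) = card {u\<in>S. E u v} + card {u\<in>V-S. E u v}"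
    by (rule card_Un_disjoint) (use f assms(2) in \<open>auto intro: finite_subset\<close>)
  ultimately show ?thesis unfolding delta_in_def deg_def by simp
qed

lemma def_iff:
  assumes "finite V"
  shows "defensive_alliance V E k S \<longleftrightarrow> S \<noteq> {} \<and> S \<subseteq> V \<and> (\<forall>v\<in>S. 2*delta_in E S v \<ge> int (deg V E v) + k)"
  unfolding defensive_alliance_def using delta_compl[OF assms] by auto

lemma off_iff:
  assumes "finite V"
  shows "offensive_alliance V E k S \<longleftrightarrow> S \<noteq> {} \<and> S \<subseteq> V \<and> (\<forall>v\<in>boundary V E S. 2*delta_in E S v \<ge> int (deg V E v) + k)"
  unfolding offensive_alliance_def using delta_compl[OF assms] by auto

lemma maxdeg_ge: "graph V E \<Longrightarrow> v \<in> V \<Longrightarrow> int (deg V E v) \<le> maxdeg V E"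
  unfolding maxdeg_def using graph_fin by (auto intro!: Max_ge finite_imageI)

lemma mindeg_le: "graph V E \<Longrightarrow> v \<in> V \<Longrightarrow> mindeg V E \<le> int (deg V E v)"
  unfolding mindeg_def using graph_fin by (auto intro!: Min_le finite_imageI)

lemma maxdeg_nonneg: "maxdeg V E \<ge> 0" unfolding maxdeg_def by simp

lemma cart_fin: "graph V1 E1 \<Longrightarrow> graph V2 E2 \<Longrightarrow> finite (V1 \<times> V2)"
  by (metis graph_fin finite_cartesian_product)

lemma cart_delta:
  assumes g1: "graph V1 E1" and g2: "graph V2 E2" and S: "S \<subseteq> V1 \<times> V2"
  shows "delta_in (cart_E E1 E2) S (a,b) = int (card {c. (c,b)\<in>S \<and> E1 c a}) + int (card {d. (a,d)\<in>S \<and> E2 d b})"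
proof -
  have fS: "finite S" using S g1 g2 graph_fin finite_cartesian_product finite_subset by metis
  let ?R = "{c. (c,b)\<in>S \<and> E1 c a}" and ?C = "{d. (a,d)\<in>S \<and> E2 d b}"
  have fR: "finite ?R" by (rule finite_subset[of _ "fst ` S"]) (use fS in force)+
  have fC: "finite ?C" by (rule finite_subset[of _ "snd ` S"]) (use fS in force)+
  have eq: "{u\<in>S. cart_E E1 E2 u (a,b)} = (\<lambda>c. (c,b)) ` ?R \<union> (\<lambda>d. (a,d)) ` ?C"
    unfolding cart_E_def by auto
  have dis: "(\<lambda>c. (c,b)) ` ?R \<inter> (\<lambda>d. (a,d)) ` ?C = {}"
    using g1 unfolding graph_def by auto
  have "card {u\<in>S. cart_E E1 E2 u (a,b)} = card ((\<lambda>c. (c,b)) ` ?R) + card ((\<lambda>d. (a,d)) ` ?C)"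
    unfolding eq by (rule card_Un_disjoint) (use fR fC dis in auto)
  also have "\<dots> = card ?R + card ?C"
    by (subst card_image, simp add: inj_on_def)+ simp
  finally show ?thesis unfolding delta_in_def by simp
qed

lemma cart_deg:
  assumes g1: "graph V1 E1" and g2: "graph V2 E2" and "a \<in> V1" "b \<in> V2"
  shows "int (deg (V1 \<times> V2) (cart_E E1 E2) (a,b)) = int (deg V1 E1 a) + int (deg V2 E2 b)"
proof -
  have "int (deg (V1 \<times> V2) (cart_E E1 E2) (a,b)) = delta_in (cart_E E1 E2) (V1 \<times> V2) (a,b)"
    unfolding deg_def delta_in_def by simp
  also have "\<dots> = int (card {c. (c,b)\<in>V1\<times>V2 \<and> E1 c a}) + int (card {d. (a,d)\<in>V1\<times>V2 \<and> E2 d b})"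
    by (rule cart_delta[OF g1 g2]) simp
  also have "{c. (c,b)\<in>V1\<times>V2 \<and> E1 c a} = {c\<in>V1. E1 c a}" using assms by auto
  also have "{d. (a,d)\<in>V1\<times>V2 \<and> E2 d b} = {d\<in>V2. E2 d b}" using assms by auto
  finally show ?thesis unfolding deg_def by simp
qed


lemma finS: "graph V1 E1 \<Longrightarrow> graph V2 E2 \<Longrightarrow> S \<subseteq> V1 \<times> V2 \<Longrightarrow> finite S"
  using cart_fin finite_subset by metis

lemma row_le:
  assumes "finite S"
  shows "card {c. (c,b)\<in>S \<and> E1 c a} \<le> card {u\<in>fst ` S. E1 u a}"
  by (rule card_mono) (use assms in force)+

lemma col_le:
  assumes "finite S"
  shows "card {d. (a,d)\<in>S \<and> E2 d b} \<le> card {u\<in>snd ` S. E2 u b}"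
  by (rule card_mono) (use assms in force)+

lemma col_deg:
  assumes "finite V2" "S \<subseteq> V1 \<times> V2"
  shows "card {d. (a,d)\<in>S \<and> E2 d b} \<le> deg V2 E2 b"
  unfolding deg_def by (rule card_mono) (use assms in auto)

lemma row_deg:
  assumes "finite V1" "S \<subseteq> V1 \<times> V2"
  shows "card {c. (c,b)\<in>S \<and> E1 c a} \<le> deg V1 E1 a"
  unfolding deg_def by (rule card_mono) (use assms in auto)

lemma proj1:
  assumes g1: "graph V1 E1" and g2: "graph V2 E2" and SV: "S \<subseteq> V1 \<times> V2"
    and pa: "powerful_alliance (V1 \<times> V2) (cart_E E1 E2) k S"
  shows "powerful_alliance V1 E1 (k - maxdeg V2 E2) (fst ` S)"
proof -
  let ?P = "cart_E E1 E2" and ?A = "fst ` S"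
  have fV: "finite (V1 \<times> V2)" using cart_fin[OF g1 g2] .
  have f1: "finite V1" "finite V2" using g1 g2 graph_fin by auto
  have fS: "finite S" using finS[OF g1 g2 SV] .
  have ne: "S \<noteq> {}" using pa unfolding powerful_alliance_def defensive_alliance_def by auto
  have D: "\<forall>v\<in>S. 2*delta_in ?P S v \<ge> int (deg (V1\<times>V2) ?P v) + k"
    using pa def_iff[OF fV] unfolding powerful_alliance_def by auto
  have O: "\<forall>v\<in>boundary (V1\<times>V2) ?P S. 2*delta_in ?P S v \<ge> int (deg (V1\<times>V2) ?P v) + (k+2)"
    using pa off_iff[OF fV] unfolding powerful_alliance_def by auto
  have Dp: "\<forall>a\<in>?A. 2*delta_in E1 ?A a \<ge> int (deg V1 E1 a) + (k - maxdeg V2 E2)"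
  proof
    fix a assume "a \<in> ?A"
    then obtain b where ab: "(a,b) \<in> S" by force
    hence ab': "a \<in> V1" "b \<in> V2" using SV by auto
    have e: "delta_in ?P S (a,b) = int (card {c. (c,b)\<in>S \<and> E1 c a}) + int (card {d. (a,d)\<in>S \<and> E2 d b})"
      using cart_delta[OF g1 g2 SV] .
    have r: "card {c. (c,b)\<in>S \<and> E1 c a} \<le> card {u\<in>?A. E1 u a}" using row_le[OF fS] .
    have c: "card {d. (a,d)\<in>S \<and> E2 d b} \<le> deg V2 E2 b" using col_deg[OF f1(2) SV] .
    have m: "int (deg V2 E2 b) \<le> maxdeg V2 E2" using maxdeg_ge[OF g2 ab'(2)] .
    have dg: "int (deg (V1 \<times> V2) ?P (a,b)) = int (deg V1 E1 a) + int (deg V2 E2 b)"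
      using cart_deg[OF g1 g2 ab'] .
    have "2*delta_in ?P S (a,b) \<ge> int (deg (V1\<times>V2) ?P (a,b)) + k" using D ab by blast
    thus "2*delta_in E1 ?A a \<ge> int (deg V1 E1 a) + (k - maxdeg V2 E2)"
      using e r c m dg unfolding delta_in_def by linarith
  qed
  have Op: "\<forall>a\<in>boundary V1 E1 ?A. 2*delta_in E1 ?A a \<ge> int (deg V1 E1 a) + (k - maxdeg V2 E2 + 2)"
  proof
    fix a assume "a \<in> boundary V1 E1 ?A"
    then obtain c where a: "a \<in> V1" "a \<notin> ?A" "c \<in> ?A" "E1 c a" unfolding boundary_def by auto
    then obtain b where cb: "(c,b) \<in> S" by force
    hence b: "b \<in> V2" using SV by auto
    have "(a,b) \<notin> S" using a(2) by force
    moreover have "?P (c,b) (a,b)" unfolding cart_E_def using a(4) by simp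
    ultimately have bd: "(a,b) \<in> boundary (V1\<times>V2) ?P S" unfolding boundary_def using a(1) b cb by blast
    have e: "delta_in ?P S (a,b) = int (card {c. (c,b)\<in>S \<and> E1 c a}) + int (card {d. (a,d)\<in>S \<and> E2 d b})"
      using cart_delta[OF g1 g2 SV] .
    have z: "{d. (a,d)\<in>S \<and> E2 d b} = {}" using a(2) by force
    have r: "card {c. (c,b)\<in>S \<and> E1 c a} \<le> card {u\<in>?A. E1 u a}" using row_le[OF fS] .
    have m: "0 \<le> maxdeg V2 E2" using maxdeg_nonneg .
    have dg: "int (deg (V1 \<times> V2) ?P (a,b)) = int (deg V1 E1 a) + int (deg V2 E2 b)"
      using cart_deg[OF g1 g2 a(1) b] .
    have "2*delta_in ?P S (a,b) \<ge> int (deg (V1\<times>V2) ?P (a,b)) + (k+2)" using O bd by blast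
    thus "2*delta_in E1 ?A a \<ge> int (deg V1 E1 a) + (k - maxdeg V2 E2 + 2)"
      using e z r m dg unfolding delta_in_def by simp
  qed
  have sub: "?A \<subseteq> V1" using SV by auto
  show ?thesis unfolding powerful_alliance_def
    using def_iff[OF f1(1)] off_iff[OF f1(1)] Dp Op sub ne by auto
qed

lemma proj2:
  assumes g1: "graph V1 E1" and g2: "graph V2 E2" and SV: "S \<subseteq> V1 \<times> V2"
    and pa: "powerful_alliance (V1 \<times> V2) (cart_E E1 E2) k S"
  shows "powerful_alliance V2 E2 (k - maxdeg V1 E1) (snd ` S)"
proof -
  let ?P = "cart_E E1 E2" and ?A = "snd ` S"
  have fV: "finite (V1 \<times> V2)" using cart_fin[OF g1 g2] .
  have f1: "finite V1" "finite V2" using g1 g2 graph_fin by auto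
  have fS: "finite S" using finS[OF g1 g2 SV] .
  have ne: "S \<noteq> {}" using pa unfolding powerful_alliance_def defensive_alliance_def by auto
  have D: "\<forall>v\<in>S. 2*delta_in ?P S v \<ge> int (deg (V1\<times>V2) ?P v) + k"
    using pa def_iff[OF fV] unfolding powerful_alliance_def by auto
  have O: "\<forall>v\<in>boundary (V1\<times>V2) ?P S. 2*delta_in ?P S v \<ge> int (deg (V1\<times>V2) ?P v) + (k+2)"
    using pa off_iff[OF fV] unfolding powerful_alliance_def by auto
  have Dp: "\<forall>a\<in>?A. 2*delta_in E2 ?A a \<ge> int (deg V2 E2 a) + (k - maxdeg V1 E1)"
  proof
    fix a assume "a \<in> ?A"
    then obtain b where ab: "(b,a) \<in> S" by force
    hence ab': "b \<in> V1" "a \<in> V2" using SV by auto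
    have e: "delta_in ?P S (b,a) = int (card {c. (c,a)\<in>S \<and> E1 c b}) + int (card {d. (b,d)\<in>S \<and> E2 d a})"
      using cart_delta[OF g1 g2 SV] .
    have r: "card {d. (b,d)\<in>S \<and> E2 d a} \<le> card {u\<in>?A. E2 u a}" using col_le[OF fS] .
    have c: "card {c. (c,a)\<in>S \<and> E1 c b} \<le> deg V1 E1 b" using row_deg[OF f1(1) SV] .
    have m: "int (deg V1 E1 b) \<le> maxdeg V1 E1" using maxdeg_ge[OF g1 ab'(1)] .
    have dg: "int (deg (V1 \<times> V2) ?P (b,a)) = int (deg V1 E1 b) + int (deg V2 E2 a)"
      using cart_deg[OF g1 g2 ab'] .
    have "2*delta_in ?P S (b,a) \<ge> int (deg (V1\<times>V2) ?P (b,a)) + k" using D ab by blast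
    thus "2*delta_in E2 ?A a \<ge> int (deg V2 E2 a) + (k - maxdeg V1 E1)"
      using e r c m dg unfolding delta_in_def by linarith
  qed
  have Op: "\<forall>a\<in>boundary V2 E2 ?A. 2*delta_in E2 ?A a \<ge> int (deg V2 E2 a) + (k - maxdeg V1 E1 + 2)"
  proof
    fix a assume "a \<in> boundary V2 E2 ?A"
    then obtain c where a: "a \<in> V2" "a \<notin> ?A" "c \<in> ?A" "E2 c a" unfolding boundary_def by auto
    then obtain b where cb: "(b,c) \<in> S" by force
    hence b: "b \<in> V1" using SV by auto
    have "(b,a) \<notin> S" using a(2) by force
    moreover have "?P (b,c) (b,a)" unfolding cart_E_def using a(4) by simp
    ultimately have bd: "(b,a) \<in> boundary (V1\<times>V2) ?P S" unfolding boundary_def using a(1) b cb by blast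
    have e: "delta_in ?P S (b,a) = int (card {c. (c,a)\<in>S \<and> E1 c b}) + int (card {d. (b,d)\<in>S \<and> E2 d a})"
      using cart_delta[OF g1 g2 SV] .
    have z: "{c. (c,a)\<in>S \<and> E1 c b} = {}" using a(2) by force
    have r: "card {d. (b,d)\<in>S \<and> E2 d a} \<le> card {u\<in>?A. E2 u a}" using col_le[OF fS] .
    have m: "0 \<le> maxdeg V1 E1" using maxdeg_nonneg .
    have dg: "int (deg (V1 \<times> V2) ?P (b,a)) = int (deg V1 E1 b) + int (deg V2 E2 a)"
      using cart_deg[OF g1 g2 b a(1)] .
    have "2*delta_in ?P S (b,a) \<ge> int (deg (V1\<times>V2) ?P (b,a)) + (k+2)" using O bd by blast
    thus "2*delta_in E2 ?A a \<ge> int (deg V2 E2 a) + (k - maxdeg V1 E1 + 2)"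
      using e z r m dg unfolding delta_in_def by simp
  qed
  have sub: "?A \<subseteq> V2" using SV by auto
  show ?thesis unfolding powerful_alliance_def
    using def_iff[OF f1(2)] off_iff[OF f1(2)] Dp Op sub ne by auto
qed


lemma core:
  assumes g1: "graph V1 E1" and g2: "graph V2 E2" and SV: "S \<subseteq> V1 \<times> V2"
    and pa: "powerful_alliance (V1 \<times> V2) (cart_E E1 E2) k S"
    and kk: "k1 + k2 - 1 \<le> k" and k2: "1 - mindeg V2 E2 \<le> k2"
    and nocol: "\<And>a. \<not> powerful_alliance V2 E2 k2 {d. (a,d)\<in>S}"
  shows "powerful_alliance V1 E1 k1 (fst ` S)"
proof -
  let ?P = "cart_E E1 E2" and ?A = "fst ` S"
  have fV: "finite (V1 \<times> V2)" using cart_fin[OF g1 g2] .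
  have f1: "finite V1" "finite V2" using g1 g2 graph_fin by auto
  have fS: "finite S" using finS[OF g1 g2 SV] .
  have ne: "S \<noteq> {}" using pa unfolding powerful_alliance_def defensive_alliance_def by auto
  have D: "\<forall>v\<in>S. 2*delta_in ?P S v \<ge> int (deg (V1\<times>V2) ?P v) + k"
    using pa def_iff[OF fV] unfolding powerful_alliance_def by auto
  have O: "\<forall>v\<in>boundary (V1\<times>V2) ?P S. 2*delta_in ?P S v \<ge> int (deg (V1\<times>V2) ?P v) + (k+2)"
    using pa off_iff[OF fV] unfolding powerful_alliance_def by auto
  have Dp: "\<forall>a\<in>?A. 2*delta_in E1 ?A a \<ge> int (deg V1 E1 a) + k1"
  proof
    fix a assume aA: "a \<in> ?A"
    then obtain b0 where ab0: "(a,b0) \<in> S" by force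
    hence a1: "a \<in> V1" using SV by auto
    show "2*delta_in E1 ?A a \<ge> int (deg V1 E1 a) + k1"
    proof (rule ccontr)
      assume H: "\<not> ?thesis"
      let ?B = "{d. (a,d)\<in>S}"
      have Bne: "?B \<noteq> {}" using ab0 by auto
      have Bsub: "?B \<subseteq> V2" using SV by auto
      have BD: "\<forall>b\<in>?B. 2*delta_in E2 ?B b \<ge> int (deg V2 E2 b) + k2"
      proof
        fix b assume "b \<in> ?B"
        hence ab: "(a,b) \<in> S" by simp
        hence b2: "b \<in> V2" using SV by auto
        have e: "delta_in ?P S (a,b) = int (card {c. (c,b)\<in>S \<and> E1 c a}) + int (card {d. (a,d)\<in>S \<and> E2 d b})"
          using cart_delta[OF g1 g2 SV] .
        have r: "card {c. (c,b)\<in>S \<and> E1 c a} \<le> card {u\<in>?A. E1 u a}" using row_le[OF fS] .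
        have dg: "int (deg (V1 \<times> V2) ?P (a,b)) = int (deg V1 E1 a) + int (deg V2 E2 b)"
          using cart_deg[OF g1 g2 a1 b2] .
        have "2*delta_in ?P S (a,b) \<ge> int (deg (V1\<times>V2) ?P (a,b)) + k" using D ab by blast
        thus "2*delta_in E2 ?B b \<ge> int (deg V2 E2 b) + k2"
          using e r dg H kk unfolding delta_in_def by simp
      qed
      have BO: "\<forall>b\<in>boundary V2 E2 ?B. 2*delta_in E2 ?B b \<ge> int (deg V2 E2 b) + (k2+2)"
      proof
        fix b assume "b \<in> boundary V2 E2 ?B"
        then obtain d where b: "b \<in> V2" "(a,b) \<notin> S" "(a,d) \<in> S" "E2 d b" unfolding boundary_def by auto
        have "?P (a,d) (a,b)" unfolding cart_E_def using b(4) by simp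
        hence bd: "(a,b) \<in> boundary (V1\<times>V2) ?P S" unfolding boundary_def using a1 b by blast
        have e: "delta_in ?P S (a,b) = int (card {c. (c,b)\<in>S \<and> E1 c a}) + int (card {d. (a,d)\<in>S \<and> E2 d b})"
          using cart_delta[OF g1 g2 SV] .
        have r: "card {c. (c,b)\<in>S \<and> E1 c a} \<le> card {u\<in>?A. E1 u a}" using row_le[OF fS] .
        have dg: "int (deg (V1 \<times> V2) ?P (a,b)) = int (deg V1 E1 a) + int (deg V2 E2 b)"
          using cart_deg[OF g1 g2 a1 b(1)] .
        have "2*delta_in ?P S (a,b) \<ge> int (deg (V1\<times>V2) ?P (a,b)) + (k+2)" using O bd by blast
        thus "2*delta_in E2 ?B b \<ge> int (deg V2 E2 b) + (k2+2)"
          using e r dg H kk unfolding delta_in_def by simp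
      qed
      have "powerful_alliance V2 E2 k2 ?B" unfolding powerful_alliance_def
        using def_iff[OF f1(2)] off_iff[OF f1(2)] BD BO Bsub Bne by auto
      thus False using nocol by blast
    qed
  qed
  have Op: "\<forall>a\<in>boundary V1 E1 ?A. 2*delta_in E1 ?A a \<ge> int (deg V1 E1 a) + (k1 + 2)"
  proof
    fix a assume "a \<in> boundary V1 E1 ?A"
    then obtain c where a: "a \<in> V1" "a \<notin> ?A" "c \<in> ?A" "E1 c a" unfolding boundary_def by auto
    then obtain b where cb: "(c,b) \<in> S" by force
    hence b: "b \<in> V2" using SV by auto
    have "(a,b) \<notin> S" using a(2) by force
    moreover have "?P (c,b) (a,b)" unfolding cart_E_def using a(4) by simp
    ultimately have bd: "(a,b) \<in> boundary (V1\<times>V2) ?P S" unfolding boundary_def using a(1) b cb by blast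
    have e: "delta_in ?P S (a,b) = int (card {c. (c,b)\<in>S \<and> E1 c a}) + int (card {d. (a,d)\<in>S \<and> E2 d b})"
      using cart_delta[OF g1 g2 SV] .
    have z: "{d. (a,d)\<in>S \<and> E2 d b} = {}" using a(2) by force
    have r: "card {c. (c,b)\<in>S \<and> E1 c a} \<le> card {u\<in>?A. E1 u a}" using row_le[OF fS] .
    have m: "mindeg V2 E2 \<le> int (deg V2 E2 b)" using mindeg_le[OF g2 b] .
    have dg: "int (deg (V1 \<times> V2) ?P (a,b)) = int (deg V1 E1 a) + int (deg V2 E2 b)"
      using cart_deg[OF g1 g2 a(1) b] .
    have "2*delta_in ?P S (a,b) \<ge> int (deg (V1\<times>V2) ?P (a,b)) + (k+2)" using O bd by blast
    thus "2*delta_in E1 ?A a \<ge> int (deg V1 E1 a) + (k1 + 2)"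
      using e z r m dg kk k2 unfolding delta_in_def by simp
  qed
  have sub: "?A \<subseteq> V1" using SV by auto
  show ?thesis unfolding powerful_alliance_def
    using def_iff[OF f1(1)] off_iff[OF f1(1)] Dp Op sub ne by auto
qed


lemma part1a:
  assumes g1: "graph V1 E1" and g2: "graph V2 E2"
  shows "phi_p (cart_V V1 V2) (cart_E E1 E2) k \<ge> int (card V2) * phi_p V1 E1 (k - maxdeg V2 E2)"
proof -
  have f1: "finite V1" "finite V2" using g1 g2 graph_fin by auto
  obtain X where X: "paf_set V1 E1 (k - maxdeg V2 E2) X" "phi_p V1 E1 (k - maxdeg V2 E2) = int (card X)"
    using phi_att[OF f1(1)] by blast
  have XV: "X \<subseteq> V1" using X(1) unfolding paf_set_def by auto
  have "paf_set (V1 \<times> V2) (cart_E E1 E2) k (X \<times> V2)"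
    unfolding paf_set_def
  proof (intro conjI notI)
    show "X \<times> V2 \<subseteq> V1 \<times> V2" using XV by auto
    assume "\<exists>S\<subseteq>X \<times> V2. powerful_alliance (V1 \<times> V2) (cart_E E1 E2) k S"
    then obtain S where S: "S \<subseteq> X \<times> V2" "powerful_alliance (V1 \<times> V2) (cart_E E1 E2) k S" by blast
    have SV: "S \<subseteq> V1 \<times> V2" using S(1) XV by auto
    have "powerful_alliance V1 E1 (k - maxdeg V2 E2) (fst ` S)" using proj1[OF g1 g2 SV S(2)] .
    moreover have "fst ` S \<subseteq> X" using S(1) by auto
    ultimately show False using X(1) unfolding paf_set_def by blast
  qed
  hence "int (card (X \<times> V2)) \<le> phi_p (V1 \<times> V2) (cart_E E1 E2) k"
    using phi_ge cart_fin[OF g1 g2] by blast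
  thus ?thesis using X(2) unfolding cart_V_def by (simp add: card_cartesian_product mult.commute)
qed

lemma part1b:
  assumes g1: "graph V1 E1" and g2: "graph V2 E2"
  shows "phi_p (cart_V V1 V2) (cart_E E1 E2) k \<ge> int (card V1) * phi_p V2 E2 (k - maxdeg V1 E1)"
proof -
  have f1: "finite V1" "finite V2" using g1 g2 graph_fin by auto
  obtain X where X: "paf_set V2 E2 (k - maxdeg V1 E1) X" "phi_p V2 E2 (k - maxdeg V1 E1) = int (card X)"
    using phi_att[OF f1(2)] by blast
  have XV: "X \<subseteq> V2" using X(1) unfolding paf_set_def by auto
  have "paf_set (V1 \<times> V2) (cart_E E1 E2) k (V1 \<times> X)"
    unfolding paf_set_def
  proof (intro conjI notI)
    show "V1 \<times> X \<subseteq> V1 \<times> V2" using XV by auto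
    assume "\<exists>S\<subseteq>V1 \<times> X. powerful_alliance (V1 \<times> V2) (cart_E E1 E2) k S"
    then obtain S where S: "S \<subseteq> V1 \<times> X" "powerful_alliance (V1 \<times> V2) (cart_E E1 E2) k S" by blast
    have SV: "S \<subseteq> V1 \<times> V2" using S(1) XV by auto
    have "powerful_alliance V2 E2 (k - maxdeg V1 E1) (snd ` S)" using proj2[OF g1 g2 SV S(2)] .
    moreover have "snd ` S \<subseteq> X" using S(1) by auto
    ultimately show False using X(1) unfolding paf_set_def by blast
  qed
  hence "int (card (V1 \<times> X)) \<le> phi_p (V1 \<times> V2) (cart_E E1 E2) k"
    using phi_ge cart_fin[OF g1 g2] by blast
  thus ?thesis using X(2) unfolding cart_V_def by (simp add: card_cartesian_product)
qed


lemma part2: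
  assumes g1: "graph V1 E1" and g2: "graph V2 E2"
    and k1: "1 - mindeg V1 E1 \<le> k1" and k2: "1 - mindeg V2 E2 \<le> k2" and kk: "k1 + k2 - 1 \<le> k"
  shows "phi_p (cart_V V1 V2) (cart_E E1 E2) k \<ge>
          phi_p V1 E1 k1 * phi_p V2 E2 k2
          + min (int (card V1) - phi_p V1 E1 k1) (int (card V2) - phi_p V2 E2 k2)"
proof -
  let ?P = "cart_E E1 E2"
  have f1: "finite V1" "finite V2" using g1 g2 graph_fin by auto
  obtain X1 where X1: "paf_set V1 E1 k1 X1" "phi_p V1 E1 k1 = int (card X1)"
    using phi_att[OF f1(1)] by blast
  obtain X2 where X2: "paf_set V2 E2 k2 X2" "phi_p V2 E2 k2 = int (card X2)"
    using phi_att[OF f1(2)] by blast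
  have XV: "X1 \<subseteq> V1" "X2 \<subseteq> V2" using X1(1) X2(1) unfolding paf_set_def by auto
  define m where "m = min (card (V1 - X1)) (card (V2 - X2))"
  obtain R1 where R1: "R1 \<subseteq> V1 - X1" "card R1 = m"
    using obtain_subset_with_card_n[of m "V1 - X1"] unfolding m_def by auto
  obtain R2 where R2: "R2 \<subseteq> V2 - X2" "card R2 = m"
    using obtain_subset_with_card_n[of m "V2 - X2"] unfolding m_def by auto
  have fR: "finite R1" "finite R2" using R1 R2 f1 by (meson Diff_subset finite_subset subset_trans)+
  obtain f where f: "bij_betw f R1 R2" using finite_same_card_bij[OF fR] R1 R2 by auto
  have finj: "inj_on f R1" and fim: "f ` R1 = R2" using f unfolding bij_betw_def by auto
  define M where "M = (\<lambda>u. (u, f u)) ` R1"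
  define Y where "Y = X1 \<times> X2 \<union> M"
  have MV: "M \<subseteq> V1 \<times> V2" unfolding M_def using R1 R2 fim by auto
  have YV: "Y \<subseteq> V1 \<times> V2" unfolding Y_def using MV XV by auto
  have Mfst: "\<And>x y. (x,y) \<in> M \<Longrightarrow> x \<in> R1 \<and> y = f x" unfolding M_def by auto
  have "paf_set (V1 \<times> V2) ?P k Y"
    unfolding paf_set_def
  proof (intro conjI notI)
    show "Y \<subseteq> V1 \<times> V2" using YV .
    assume "\<exists>S\<subseteq>Y. powerful_alliance (V1 \<times> V2) ?P k S"
    then obtain S where S: "S \<subseteq> Y" "powerful_alliance (V1 \<times> V2) ?P k S" by blast
    have fV: "finite (V1 \<times> V2)" using cart_fin[OF g1 g2] .
    have D: "\<forall>v\<in>S. 2*delta_in ?P S v \<ge> int (deg (V1\<times>V2) ?P v) + k"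
      using S(2) def_iff[OF fV] unfolding powerful_alliance_def by auto
    have SX: "S \<subseteq> X1 \<times> X2"
    proof
      fix p assume pS: "p \<in> S"
      show "p \<in> X1 \<times> X2"
      proof (rule ccontr)
        assume "p \<notin> X1 \<times> X2"
        hence "p \<in> M" using pS S(1) unfolding Y_def by auto
        then obtain u where u: "u \<in> R1" "p = (u, f u)" unfolding M_def by auto
        have uw: "u \<in> V1" "u \<notin> X1" "f u \<in> V2" "f u \<notin> X2" using u(1) R1 R2 fim by auto
        have e0: "{q\<in>S. ?P q (u, f u)} = {}"
        proof (rule ccontr)
          assume "{q\<in>S. ?P q (u, f u)} \<noteq> {}"
          then obtain x y where q: "(x,y) \<in> S" "?P (x,y) (u, f u)" by auto
          have qY: "(x,y) \<in> Y" using q(1) S(1) by auto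
          from q(2) have "(x = u \<and> E2 y (f u)) \<or> (y = f u \<and> E1 x u)" unfolding cart_E_def by simp
          thus False
          proof
            assume h: "x = u \<and> E2 y (f u)"
            hence "(x,y) \<in> M" using qY uw unfolding Y_def by auto
            hence "y = f u" using Mfst h by auto
            thus False using h g2 unfolding graph_def by auto
          next
            assume h: "y = f u \<and> E1 x u"
            hence "(x,y) \<in> M" using qY uw unfolding Y_def by auto
            hence "x \<in> R1" "f x = f u" using Mfst h by auto
            hence "x = u" using finj u(1) inj_on_def by metis
            thus False using h g1 unfolding graph_def by auto
          qed
        qed
        have z: "delta_in ?P S (u, f u) = 0" unfolding delta_in_def e0 by simp
        have dg: "int (deg (V1 \<times> V2) ?P (u, f u)) = int (deg V1 E1 u) + int (deg V2 E2 (f u))"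
          using cart_deg[OF g1 g2 uw(1) uw(3)] .
        have m1: "mindeg V1 E1 \<le> int (deg V1 E1 u)" using mindeg_le[OF g1 uw(1)] .
        have m2: "mindeg V2 E2 \<le> int (deg V2 E2 (f u))" using mindeg_le[OF g2 uw(3)] .
        have "2*delta_in ?P S (u, f u) \<ge> int (deg (V1\<times>V2) ?P (u, f u)) + k" using D pS u(2) by blast
        thus False using z dg m1 m2 k1 k2 kk by linarith
      qed
    qed
    have SV: "S \<subseteq> V1 \<times> V2" using SX XV by auto
    have nocol: "\<And>a. \<not> powerful_alliance V2 E2 k2 {d. (a,d)\<in>S}"
    proof
      fix a assume "powerful_alliance V2 E2 k2 {d. (a,d)\<in>S}"
      moreover have "{d. (a,d)\<in>S} \<subseteq> X2" using SX by auto
      ultimately show False using X2(1) unfolding paf_set_def by blast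
    qed
    have "powerful_alliance V1 E1 k1 (fst ` S)" using core[OF g1 g2 SV S(2) kk k2 nocol] .
    moreover have "fst ` S \<subseteq> X1" using SX by auto
    ultimately show False using X1(1) unfolding paf_set_def by blast
  qed
  hence le: "int (card Y) \<le> phi_p (V1 \<times> V2) ?P k"
    using phi_ge cart_fin[OF g1 g2] by blast
  have fX: "finite (X1 \<times> X2)" using XV f1 by (meson finite_SigmaI finite_subset)
  have fM: "finite M" unfolding M_def using fR by auto
  have dis: "X1 \<times> X2 \<inter> M = {}" using Mfst R1 by blast
  have cM: "card M = m" unfolding M_def using R1(2) by (subst card_image) (auto simp: inj_on_def)
  have cY: "card Y = card X1 * card X2 + m" unfolding Y_def
    using card_Un_disjoint[OF fX fM dis] cM by (simp add: card_cartesian_product)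
  have c1: "int (card (V1 - X1)) = int (card V1) - int (card X1)"
    using card_Diff_subset[OF finite_subset[OF XV(1) f1(1)] XV(1)] card_mono[OF f1(1) XV(1)] by simp
  have c2: "int (card (V2 - X2)) = int (card V2) - int (card X2)"
    using card_Diff_subset[OF finite_subset[OF XV(2) f1(2)] XV(2)] card_mono[OF f1(2) XV(2)] by simp
  have "int m = min (int (card V1) - int (card X1)) (int (card V2) - int (card X2))"
    unfolding m_def using c1 c2 by linarith
  thus ?thesis using le cY X1(2) X2(2) unfolding cart_V_def by simp
qed

theorem corollary5:
  fixes V1 :: "'a set" and E1 :: "'a \<Rightarrow> 'a \<Rightarrow> bool"
    and V2 :: "'b set" and E2 :: "'b \<Rightarrow> 'b \<Rightarrow> bool"
  assumes "graph V1 E1" and "graph V2 E2"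
  shows
   "(\<forall>k::int. maxdeg V2 E2 - maxdeg V1 E1 \<le> k \<and> k \<le> maxdeg V1 E1 + maxdeg V2 E2 - 2 \<longrightarrow>
       phi_p (cart_V V1 V2) (cart_E E1 E2) k \<ge> int (card V2) * phi_p V1 E1 (k - maxdeg V2 E2))
    \<and> (\<forall>k::int. maxdeg V1 E1 - maxdeg V2 E2 \<le> k \<and> k \<le> maxdeg V1 E1 + maxdeg V2 E2 - 2 \<longrightarrow>
       phi_p (cart_V V1 V2) (cart_E E1 E2) k \<ge> int (card V1) * phi_p V2 E2 (k - maxdeg V1 E1))
    \<and> (\<forall>k1 k2 k::int.
        1 - mindeg V1 E1 \<le> k1 \<and> k1 \<le> maxdeg V1 E1 - 2 \<and>
        1 - mindeg V2 E2 \<le> k2 \<and> k2 \<le> maxdeg V2 E2 - 2 \<and>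
        k1 + k2 - 1 \<le> k \<and> k \<le> maxdeg V1 E1 + maxdeg V2 E2 - 2 \<longrightarrow>
        phi_p (cart_V V1 V2) (cart_E E1 E2) k \<ge>
          phi_p V1 E1 k1 * phi_p V2 E2 k2
          + min (int (card V1) - phi_p V1 E1 k1) (int (card V2) - phi_p V2 E2 k2))"
  using part1a[OF assms] part1b[OF assms] part2[OF assms] by blast

end
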